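(* Let $A\in\mathbb{C}^{m\times n}$ have rank $r$, $B\in\mathbb{C}^{m\times n}$ have rank $s$, and $E=B-A$. Then $$\|B^{\dagger}-A^{\dagger}\|_{F}^{2}\geq\max\big\{\gamma'_{1}+\|B^{\dagger}EA^{\dagger}\|_{F}^{2},\ \gamma'_{2}+\|A^{\dagger}EB^{\dagger}\|_{F}^{2}\big\},$$ where $$\gamma'_{1}:=\frac{\|A^{\dagger}E\|_{F}^{2}-\|B\|_{2}^{2}\|A^{\dagger}EB^{\dagger}\|_{F}^{2}}{\|A\|_{2}^{2}}+\frac{\|EB^{\dagger}\|_{F}^{2}-\|A\|_{2}^{2}\|A^{\dagger}EB^{\dagger}\|_{F}^{2}}{\|B\|_{2}^{2}},$$ $$\gamma'_{2}:=\frac{\|EA^{\dagger}\|_{F}^{2}-\|B\|_{2}^{2}\|B^{\dagger}EA^{\dagger}\|_{F}^{2}}{\|A\|_{2}^{2}}+\frac{\|B^{\dagger}E\|_{F}^{2}-\|A\|_{2}^{2}\|B^{\dagger}EA^{\dagger}\|_{F}^{2}}{\|B\|_{2}^{2}}.$$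
   Context: $M^{\dagger}$ denotes the Moore–Penrose inverse of $M$, $\|\cdot\|_{2}$ the spectral norm and $\|\cdot\|_{F}$ the Frobenius norm. *)

theory Defs
  imports "HOL-Analysis.Analysis"
begin

definition cadj :: "complex ^ 'n ^ 'm \<Rightarrow> complex ^ 'm ^ 'n" where
  "cadj A = (\<chi> i j. cnj (A $ j $ i))"

definition mp_inverse :: "complex ^ 'n ^ 'm \<Rightarrow> complex ^ 'm ^ 'n" where
  "mp_inverse A = (THE X. A ** X ** A = A \<and> X ** A ** X = X \<and>
                          cadj (A ** X) = A ** X \<and> cadj (X ** A) = X ** A)"

definition spec_norm :: "complex ^ 'n ^ 'm \<Rightarrow> real" where
  "spec_norm A = onorm (\<lambda>x. A *v x)"

definition frob_norm :: "complex ^ 'n ^ 'm \<Rightarrow> real" where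
  "frob_norm A = sqrt (\<Sum>i\<in>UNIV. \<Sum>j\<in>UNIV. (cmod (A $ i $ j))\<^sup>2)"

end

theory Submission
  imports Defs
begin


lemma inner_cx: "inner (x::complex) y = Re (x * cnj y)"
  by (simp add: inner_complex_def)

lemma inner_mat: "inner (X::complex^'p^'m) Y = Re (\<Sum>i\<in>UNIV. \<Sum>j\<in>UNIV. X$i$j * cnj (Y$i$j))"
  by (simp add: inner_vec_def inner_cx)

lemma inner_move_left:
  fixes M :: "complex^'m^'k" and X :: "complex^'p^'m" and Y :: "complex^'p^'k"
  shows "inner (M ** X) Y = inner X (cadj M ** Y)"
proof -
  have "(\<Sum>i\<in>UNIV. \<Sum>j\<in>UNIV. (M ** X)$i$j * cnj (Y$i$j))
      = (\<Sum>i\<in>UNIV. \<Sum>j\<in>UNIV. \<Sum>l\<in>UNIV. M$i$l * X$l$j * cnj (Y$i$j))"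
    by (simp add: matrix_matrix_mult_def sum_distrib_right)
  also have "\<dots> = (\<Sum>i\<in>UNIV. \<Sum>l\<in>UNIV. \<Sum>j\<in>UNIV. M$i$l * X$l$j * cnj (Y$i$j))"
    by (rule sum.cong[OF refl], rule sum.swap)
  also have "\<dots> = (\<Sum>l\<in>UNIV. \<Sum>i\<in>UNIV. \<Sum>j\<in>UNIV. M$i$l * X$l$j * cnj (Y$i$j))"
    by (rule sum.swap)
  also have "\<dots> = (\<Sum>l\<in>UNIV. \<Sum>j\<in>UNIV. \<Sum>i\<in>UNIV. M$i$l * X$l$j * cnj (Y$i$j))"
    by (rule sum.cong[OF refl], rule sum.swap)
  also have "\<dots> = (\<Sum>l\<in>UNIV. \<Sum>j\<in>UNIV. X$l$j * cnj ((cadj M ** Y)$l$j))"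
    by (simp add: matrix_matrix_mult_def cadj_def sum_distrib_left mult_ac)
  finally show ?thesis by (simp add: inner_mat)
qed

lemma cadj_cadj[simp]: "cadj (cadj M) = M"
  by (simp add: cadj_def vec_eq_iff)

lemma cadj_mult: "cadj ((M::complex^'m^'k) ** N) = cadj N ** cadj M"
  by (simp add: cadj_def vec_eq_iff matrix_matrix_mult_def mult.commute)

lemma cadj_add: "cadj (M + N) = cadj M + cadj N"
  by (simp add: cadj_def vec_eq_iff)

lemma cadj_diff: "cadj (M - N) = cadj M - cadj N"
  by (simp add: cadj_def vec_eq_iff)

lemma cadj_minus: "cadj (- M) = - cadj M"
  by (simp add: cadj_def vec_eq_iff)

lemma cadj_zero[simp]: "cadj 0 = 0"
  by (simp add: cadj_def vec_eq_iff)

lemma cadj_mat1[simp]: "cadj (mat 1) = mat 1"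
  by (simp add: cadj_def vec_eq_iff mat_def)

lemma inner_cadj: "inner (cadj X) (cadj (Y::complex^'p^'m)) = inner X Y"
proof -
  have "(\<Sum>i\<in>UNIV. \<Sum>j\<in>UNIV. Re (cadj X$i$j * cnj (cadj Y$i$j)))
      = (\<Sum>i\<in>UNIV. \<Sum>j\<in>UNIV. Re (X$j$i * cnj (Y$j$i)))"
    by (simp add: cadj_def)
  also have "\<dots> = (\<Sum>j\<in>UNIV. \<Sum>i\<in>UNIV. Re (X$j$i * cnj (Y$j$i)))"
    by (rule sum.swap)
  finally show ?thesis by (simp add: inner_vec_def inner_cx)
qed

lemma norm_cadj: "norm (cadj X) = norm X"
  by (simp add: norm_eq_sqrt_inner inner_cadj)

lemma inner_move_right:
  fixes M :: "complex^'p^'q" and X :: "complex^'q^'m" and Y :: "complex^'p^'m"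
  shows "inner (X ** M) Y = inner X (Y ** cadj M)"
proof -
  have "inner (X ** M) Y = inner (cadj (X ** M)) (cadj Y)" by (simp add: inner_cadj)
  also have "\<dots> = inner (cadj M ** cadj X) (cadj Y)" by (simp add: cadj_mult)
  also have "\<dots> = inner (cadj X) (M ** cadj Y)" by (simp add: inner_move_left)
  also have "\<dots> = inner (cadj X) (cadj (Y ** cadj M))" by (simp add: cadj_mult)
  also have "\<dots> = inner X (Y ** cadj M)" by (simp add: inner_cadj)
  finally show ?thesis .
qed

lemma inner_move_vec:
  fixes M :: "complex^'n^'m" and y :: "complex^'m" and z :: "complex^'n"
  shows "inner (cadj M *v y) z = inner y (M *v z)"
proof -
  have "(\<Sum>j\<in>UNIV. (cadj M *v y)$j * cnj (z$j)) = (\<Sum>j\<in>UNIV. \<Sum>i\<in>UNIV. cnj (M$i$j) * y$i * cnj (z$j))"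
    by (simp add: matrix_vector_mult_def cadj_def sum_distrib_right)
  also have "\<dots> = (\<Sum>i\<in>UNIV. \<Sum>j\<in>UNIV. cnj (M$i$j) * y$i * cnj (z$j))"
    by (rule sum.swap)
  also have "\<dots> = (\<Sum>i\<in>UNIV. y$i * cnj ((M *v z)$i))"
    by (simp add: matrix_vector_mult_def sum_distrib_left mult_ac)
  finally show ?thesis unfolding inner_vec_def inner_cx by (metis Re_sum)
qed

lemma bl_mv: "bounded_linear (\<lambda>x. (M::complex^'n^'m) *v x)"
  by (simp add: linear_conv_bounded_linear)

lemma spec_mv: "norm (M *v x) \<le> spec_norm M * norm x"
  unfolding spec_norm_def by (rule onorm[OF bl_mv])

lemma spec_nonneg: "0 \<le> spec_norm M"
  unfolding spec_norm_def by (rule onorm_pos_le[OF bl_mv])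

lemma spec_cadj_le: "spec_norm (cadj M) \<le> spec_norm (M::complex^'n^'m)"
  unfolding spec_norm_def[of "cadj M"]
proof (rule onorm_le)
  fix y :: "complex^'m"
  have "(norm (cadj M *v y))^2 = inner (cadj M *v y) (cadj M *v y)"
    by (simp add: power2_norm_eq_inner)
  also have "\<dots> = inner y (M *v (cadj M *v y))" by (rule inner_move_vec)
  also have "\<dots> \<le> norm y * norm (M *v (cadj M *v y))" by (rule norm_cauchy_schwarz)
  also have "\<dots> \<le> norm y * (spec_norm M * norm (cadj M *v y))"
    by (simp add: mult_left_mono spec_mv)
  finally have h: "(norm (cadj M *v y))^2 \<le> spec_norm M * norm y * norm (cadj M *v y)"
    by (simp add: mult_ac)
  show "norm (cadj M *v y) \<le> spec_norm M * norm y"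
  proof (cases "norm (cadj M *v y) = 0")
    case True then show ?thesis by (simp add: spec_nonneg)
  next
    case False
    then have "0 < norm (cadj M *v y)" by simp
    with h show ?thesis by (simp add: power2_eq_square)
  qed
qed

lemma norm_sq_cols: "(norm (X::complex^'p^'m))^2 = (\<Sum>j\<in>UNIV. (norm (column j X))^2)"
proof -
  have "(norm X)^2 = (\<Sum>i\<in>UNIV. \<Sum>j\<in>UNIV. (cmod (X$i$j))^2)"
    by (simp add: norm_vec_def L2_set_def sum_nonneg)
  also have "\<dots> = (\<Sum>j\<in>UNIV. \<Sum>i\<in>UNIV. (cmod (X$i$j))^2)" by (rule sum.swap)
  also have "\<dots> = (\<Sum>j\<in>UNIV. (norm (column j X))^2)"
    by (simp add: norm_vec_def L2_set_def sum_nonneg column_def)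
  finally show ?thesis .
qed

lemma column_mult: "column j (M ** X) = M *v column j X"
  by (simp add: column_def matrix_matrix_mult_def matrix_vector_mult_def vec_eq_iff)

lemma norm_mult_left: "norm ((M::complex^'m^'k) ** X) \<le> spec_norm M * norm (X::complex^'p^'m)"
proof -
  have "(norm (M ** X))^2 = (\<Sum>j\<in>UNIV. (norm (M *v column j X))^2)"
    by (simp add: norm_sq_cols column_mult)
  also have "\<dots> \<le> (\<Sum>j\<in>UNIV. (spec_norm M * norm (column j X))^2)"
    by (rule sum_mono, rule power_mono[OF spec_mv], simp)
  also have "\<dots> = (spec_norm M * norm X)^2"
    by (simp add: norm_sq_cols power_mult_distrib sum_distrib_left)
  finally show ?thesis
    using spec_nonneg[of M] by (simp add: power2_le_iff_abs_le)
qed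

lemma norm_mult_right: "norm ((X::complex^'m^'k) ** M) \<le> norm X * spec_norm (M::complex^'p^'m)"
proof -
  have "norm (X ** M) = norm (cadj M ** cadj X)" by (metis norm_cadj cadj_mult)
  also have "\<dots> \<le> spec_norm (cadj M) * norm (cadj X)" by (rule norm_mult_left)
  also have "\<dots> \<le> spec_norm M * norm X"
    by (simp add: norm_cadj mult_right_mono spec_cadj_le)
  finally show ?thesis by (simp add: mult.commute)
qed

lemma mm_diff_l: "(A::complex^'m^'k) ** (B - C) = A ** B - A ** C"
  by (simp add: matrix_matrix_mult_def vec_eq_iff sum_subtractf algebra_simps)
lemma mm_diff_r: "((B::complex^'m^'k) - C) ** A = B ** A - C ** A"
  by (simp add: matrix_matrix_mult_def vec_eq_iff sum_subtractf algebra_simps)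
lemma mm_add_r: "((B::complex^'m^'k) + C) ** A = B ** A + C ** A"
  by (simp add: matrix_matrix_mult_def vec_eq_iff sum.distrib algebra_simps)
lemma mm_neg_l: "(A::complex^'m^'k) ** (- B) = - (A ** B)"
  by (simp add: matrix_matrix_mult_def vec_eq_iff sum_negf)
lemma mm_neg_r: "(- (B::complex^'m^'k)) ** A = - (B ** A)"
  by (simp add: matrix_matrix_mult_def vec_eq_iff sum_negf)

lemma zero_of_cadj_mult: "cadj D ** (D::complex^'n^'m) = 0 \<Longrightarrow> D = 0"
proof -
  assume h: "cadj D ** D = 0"
  have "(norm D)^2 = inner (D ** mat 1) D" by (simp add: power2_norm_eq_inner)
  also have "\<dots> = inner (mat 1) (cadj D ** D)" by (rule inner_move_left)
  also have "\<dots> = 0" using h by simp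
  finally show "D = 0" by simp
qed

lemma herm_of: "cadj P ** P = P \<Longrightarrow> cadj P = (P::complex^'n^'n)"
  by (metis cadj_cadj cadj_mult)

fun mpow :: "complex^'n^'n \<Rightarrow> nat \<Rightarrow> complex^'n^'n" where
  "mpow H 0 = mat 1" | "mpow H (Suc k) = H ** mpow H k"

lemma mpow_add: "mpow H (a + b) = mpow H a ** mpow H b"
  by (induction a) (simp_all add: matrix_mul_assoc)

lemma mpow_comm: "H ** mpow H k = mpow H k ** H"
proof -
  have "mpow H (k + 1) = mpow H k ** mpow H 1" by (rule mpow_add)
  then show ?thesis by simp
qed

lemma herm_sq: "cadj H = H \<Longrightarrow> H ** (H ** W) = 0 \<Longrightarrow> H ** (W::complex^'p^'n) = 0"
proof -
  assume a: "cadj H = H" and b: "H ** (H ** W) = 0"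
  have "(norm (H ** W))^2 = inner (H ** W) (H ** W)" by (simp add: power2_norm_eq_inner)
  also have "\<dots> = inner W (cadj H ** (H ** W))" by (rule inner_move_left)
  also have "\<dots> = 0" using a b by simp
  finally show ?thesis by simp
qed

lemma pow_kill_Suc:
  assumes hH: "cadj H = H"
  shows "mpow H (Suc k) ** Z = 0 \<Longrightarrow> H ** (Z::complex^'p^'n) = 0"
proof (induction k)
  case 0 then show ?case by simp
next
  case (Suc k)
  have "H ** (H ** (mpow H k ** Z)) = 0" using Suc.prems by (simp only: mpow.simps matrix_mul_assoc)
  then have "H ** (mpow H k ** Z) = 0" by (rule herm_sq[OF hH])
  then have "mpow H (Suc k) ** Z = 0" by (simp only: mpow.simps matrix_mul_assoc)
  then show ?case by (rule Suc.IH)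
qed

lemma pow_kill: "cadj H = H \<Longrightarrow> mpow H m ** Z = 0 \<Longrightarrow> H ** (Z::complex^'p^'n) = 0"
proof (cases m)
  case 0
  assume "mpow H m ** Z = 0"
  with 0 show ?thesis by simp
next
  case (Suc k)
  assume "cadj H = H" "mpow H m ** Z = 0"
  with Suc show ?thesis using pow_kill_Suc by blast
qed

lemma linear_lmul: "linear (\<lambda>R. (M::complex^'m^'k) ** R)"
  by (rule linearI) (simp_all add: matrix_add_ldistrib matrix_scalar_ac scalar_matrix_assoc)

lemma comm_span:
  assumes "R \<in> span (range (mpow H))"
  shows "H ** R = R ** H"
proof -
  have "span (range (mpow H)) \<subseteq> {R. H ** R = R ** H}"
  proof (rule span_minimal)
    show "range (mpow H) \<subseteq> {R. H ** R = R ** H}" using mpow_comm by blast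
    show "subspace {R. H ** R = R ** H}"
      unfolding subspace_def
    proof (intro conjI ballI allI)
      show "0 \<in> {R. H ** R = R ** H}" by simp
      fix x y assume "x \<in> {R. H ** R = R ** H}" "y \<in> {R. H ** R = R ** H}"
      then have "H ** x = x ** H" "H ** y = y ** H" by auto
      then show "x + y \<in> {R. H ** R = R ** H}" by (simp add: matrix_add_ldistrib mm_add_r)
    next
      fix c :: real and x assume "x \<in> {R. H ** R = R ** H}"
      then have e: "H ** x = x ** H" by auto
      have "H ** (c *\<^sub>R x) = c *\<^sub>R (H ** x)" by (simp add: matrix_scalar_ac scalar_matrix_assoc)
      also have "\<dots> = c *\<^sub>R (x ** H)" by (simp add: e)
      also have "\<dots> = (c *\<^sub>R x) ** H" by (simp add: scalar_matrix_assoc)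
      finally show "c *\<^sub>R x \<in> {R. H ** R = R ** H}" by simp
    qed
  qed
  then show ?thesis using assms by blast
qed

lemma chain_exists:
  fixes H :: "complex^'n^'n"
  shows "\<exists>m. mpow H m \<in> span (range (\<lambda>i. mpow H (i + Suc m)))"
proof (rule ccontr)
  assume na: "\<not> ?thesis"
  define S where "S m = range (\<lambda>i. mpow H (i + m))" for m
  have ins: "S m = insert (mpow H m) (S (Suc m))" for m
  proof (intro equalityI subsetI)
    fix x assume "x \<in> S m"
    then obtain i where x: "x = mpow H (i + m)" unfolding S_def by blast
    show "x \<in> insert (mpow H m) (S (Suc m))"
    proof (cases i)
      case 0 then show ?thesis using x by simp
    next
      case (Suc j)
      then have "x = mpow H (j + Suc m)" using x by simp
      then show ?thesis unfolding S_def by blast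
    qed
  next
    fix x assume "x \<in> insert (mpow H m) (S (Suc m))"
    then have "x = mpow H (0 + m) \<or> (\<exists>j. x = mpow H (Suc j + m))"
      unfolding S_def by auto
    then show "x \<in> S m" unfolding S_def by blast
  qed
  have step: "dim (S m) = dim (S (Suc m)) + 1" for m
  proof -
    have nm: "mpow H m \<notin> span (S (Suc m))" using na unfolding S_def by blast
    have "dim (S m) = dim (insert (mpow H m) (S (Suc m)))" using ins[of m] by (rule arg_cong)
    also have "\<dots> = dim (S (Suc m)) + 1" by (simp only: eucl.dim_insert nm if_False)
    finally show ?thesis .
  qed
  have "dim (S 0) = dim (S k) + k" for k
  proof (induction k)
    case 0 then show ?case by simp
  next
    case (Suc k) then show ?case using step[of k] by linarith
  qed
  then have "k \<le> dim (S 0)" for k by (metis le_add2)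
  from this[of "Suc DIM(complex^'n^'n)"] show False
    using eucl.dim_subset_UNIV[of "S 0"] by simp
qed

lemma gi_exists:
  assumes hH: "cadj H = (H::complex^'n^'n)"
  shows "\<exists>G. H ** G ** H = H \<and> G ** H = H ** G"
proof -
  obtain m where m: "mpow H m \<in> span (range (\<lambda>i. mpow H (i + Suc m)))"
    using chain_exists by blast
  have "range (\<lambda>i. mpow H (i + Suc m)) = (\<lambda>R. mpow H (Suc m) ** R) ` range (mpow H)"
  proof -
    have e: "\<And>i. mpow H (i + Suc m) = mpow H (Suc m) ** mpow H i"
      using mpow_add add.commute by metis
    show ?thesis by (simp only: e image_image)
  qed
  then have "span (range (\<lambda>i. mpow H (i + Suc m))) = (\<lambda>R. mpow H (Suc m) ** R) ` span (range (mpow H))"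
    by (simp add: linear_span_image[OF linear_lmul])
  with m obtain R where R: "R \<in> span (range (mpow H))" and eq: "mpow H m = mpow H (Suc m) ** R"
    by blast
  have c: "H ** R = R ** H" by (rule comm_span[OF R])
  have "mpow H m ** (mat 1 - H ** R) = mpow H m - mpow H m ** H ** R"
    by (simp add: mm_diff_l matrix_mul_assoc)
  also have "\<dots> = 0" using eq by (simp add: mpow_comm[symmetric])
  finally have "H ** (mat 1 - H ** R) = 0" by (rule pow_kill[OF hH])
  then have h1: "H = H ** H ** R" by (simp add: mm_diff_l matrix_mul_assoc)
  have "H ** R ** H = H ** (R ** H)" by (simp add: matrix_mul_assoc)
  also have "\<dots> = H ** (H ** R)" using c by simp
  also have "\<dots> = H" using h1 by (simp add: matrix_mul_assoc)
  finally have "H ** R ** H = H" .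
  with c show ?thesis by (intro exI[of _ R]) simp
qed



lemma gen1:
  fixes A :: "complex^'n^'m" and G :: "complex^'n^'n"
  assumes h: "cadj A ** A ** G ** (cadj A ** A) = cadj A ** A"
  shows "A ** G ** (cadj A ** A) = A"
proof -
  define H where "H = cadj A ** A"
  have hH: "cadj H = H" by (simp add: H_def cadj_mult)
  have h': "H ** G ** H = H" using h by (simp add: H_def)
  define D where "D = A ** G ** H - A"
  have cD: "cadj D = H ** cadj G ** cadj A - cadj A"
    by (simp add: D_def cadj_diff cadj_mult hH matrix_mul_assoc)
  have "cadj D ** D = H ** cadj G ** cadj A ** (A ** G ** H) - H ** cadj G ** cadj A ** A
        - (cadj A ** (A ** G ** H) - cadj A ** A)"
  proof -
    have "cadj D ** D = (H ** cadj G ** cadj A - cadj A) ** (A ** G ** H - A)"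
      unfolding cD by (simp add: D_def)
    then show ?thesis by (simp add: mm_diff_l mm_diff_r)
  qed
  also have "\<dots> = H ** cadj G ** (cadj A ** (A ** G ** H)) - H ** cadj G ** H
        - (cadj A ** (A ** G ** H) - H)"
    by (simp add: H_def matrix_mul_assoc)
  also have "cadj A ** (A ** G ** H) = H ** G ** H" by (simp add: H_def matrix_mul_assoc)
  finally have "cadj D ** D = 0" by (simp add: h')
  then have "D = 0" by (rule zero_of_cadj_mult)
  then show ?thesis by (simp add: D_def H_def)
qed

definition penrose :: "complex^'n^'m \<Rightarrow> complex^'m^'n \<Rightarrow> bool" where
  "penrose A X \<longleftrightarrow> A ** X ** A = A \<and> X ** A ** X = X \<and>
                          cadj (A ** X) = A ** X \<and> cadj (X ** A) = X ** A"

lemma zero_of_mult_cadj: "N ** cadj N = 0 \<Longrightarrow> N = 0"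
  by (metis cadj_cadj cadj_zero zero_of_cadj_mult)

lemma mp_exists: "\<exists>X. penrose (A::complex^'n^'m) X"
proof -
  define H where "H = cadj A ** A"
  have hH: "cadj H = H" by (simp add: H_def cadj_mult)
  obtain G where g1: "H ** G ** H = H" and gc: "G ** H = H ** G"
    using gi_exists[OF hH] by blast
  have g2: "H ** cadj G ** H = H"
  proof -
    have "cadj (H ** G ** H) = H ** cadj G ** H" by (simp add: cadj_mult hH matrix_mul_assoc)
    then show ?thesis using g1 hH by simp
  qed
  have a1: "A ** G ** H = A" using gen1[of A G] g1 by (simp add: H_def)
  have a2: "A ** cadj G ** H = A" using gen1[of A "cadj G"] g2 by (simp add: H_def)
  define X where "X = G ** cadj A"
  have p1: "A ** X ** A = A"
    using a1 by (simp add: X_def H_def matrix_mul_assoc)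
  have p2: "X ** A ** X = X"
  proof -
    define Y where "Y = G ** H ** G - G"
    have yh: "Y ** H = 0"
    proof -
      have "Y ** H = (G ** H ** G - G) ** H" by (simp only: Y_def)
      also have "\<dots> = G ** H ** G ** H - G ** H" by (rule mm_diff_r)
      also have "\<dots> = G ** (H ** G ** H) - G ** H" by (simp only: matrix_mul_assoc)
      also have "\<dots> = 0" by (simp only: g1 diff_self)
      finally show ?thesis .
    qed
    define N where "N = Y ** cadj A"
    have "N ** cadj N = Y ** H ** cadj Y"
      by (simp add: N_def H_def cadj_mult matrix_mul_assoc)
    then have "N ** cadj N = 0" using yh by simp
    then have n0: "N = 0" by (rule zero_of_mult_cadj)
    have "X ** A ** X = G ** H ** G ** cadj A"
      by (simp add: X_def H_def matrix_mul_assoc)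
    also have "\<dots> = (Y + G) ** cadj A" by (simp add: Y_def)
    also have "\<dots> = N + X" by (simp add: N_def X_def mm_add_r)
    finally show ?thesis using n0 by simp
  qed
  have p3: "cadj (A ** X) = A ** X"
  proof -
    define P where "P = A ** X"
    have pa: "P ** A = A" using p1 by (simp add: P_def)
    have cP: "cadj P = A ** cadj G ** cadj A"
      by (simp add: P_def X_def cadj_mult matrix_mul_assoc)
    have cpa: "cadj P ** A = A" using a2 by (simp add: cP H_def matrix_mul_assoc)
    have "cadj P ** P = cadj P ** A ** G ** cadj A"
      by (simp add: P_def X_def matrix_mul_assoc)
    also have "\<dots> = P" using cpa by (simp add: P_def X_def matrix_mul_assoc)
    finally have "cadj P ** P = P" .
    then have "cadj P = P" by (rule herm_of)
    then show ?thesis by (simp add: P_def)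
  qed
  have p4: "cadj (X ** A) = X ** A"
  proof -
    define Q where "Q = G ** H"
    have qe: "X ** A = Q" by (simp add: X_def Q_def H_def matrix_mul_assoc)
    have hq: "H ** Q = H" using g1 by (simp add: Q_def matrix_mul_assoc)
    have cqh: "cadj Q ** H = H"
    proof -
      have "cadj (H ** Q) = cadj Q ** H" by (simp add: cadj_mult hH)
      then show ?thesis using hq hH by simp
    qed
    have "cadj Q ** Q = cadj Q ** H ** G" by (simp add: Q_def gc matrix_mul_assoc)
    also have "\<dots> = Q" using cqh gc by (simp add: Q_def)
    finally have "cadj Q ** Q = Q" .
    then have "cadj Q = Q" by (rule herm_of)
    then show ?thesis by (simp add: qe)
  qed
  show ?thesis using p1 p2 p3 p4 unfolding penrose_def by blast
qed

lemma mp_unique: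
  assumes "penrose (A::complex^'n^'m) X" "penrose A Y"
  shows "X = Y"
proof -
  have x1: "A ** X ** A = A" and x2: "X ** A ** X = X" and x3: "cadj (A ** X) = A ** X"
    and x4: "cadj (X ** A) = X ** A" using assms(1) unfolding penrose_def by auto
  have y1: "A ** Y ** A = A" and y2: "Y ** A ** Y = Y" and y3: "cadj (A ** Y) = A ** Y"
    and y4: "cadj (Y ** A) = Y ** A" using assms(2) unfolding penrose_def by auto
  have cA1: "cadj A = cadj A ** (A ** Y)"
  proof -
    have "cadj A = cadj (A ** Y ** A)" using y1 by simp
    also have "\<dots> = cadj A ** cadj (A ** Y)" by (simp only: cadj_mult)
    also have "\<dots> = cadj A ** (A ** Y)" using y3 by simp
    finally show ?thesis .
  qed
  have cA2: "cadj A = X ** A ** cadj A"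
  proof -
    have "cadj A = cadj (A ** (X ** A))" using x1 by (simp add: matrix_mul_assoc)
    also have "\<dots> = cadj (X ** A) ** cadj A" by (simp only: cadj_mult)
    also have "\<dots> = X ** A ** cadj A" using x4 by simp
    finally show ?thesis .
  qed
  have ax: "A ** X = cadj X ** cadj A"
  proof -
    have "cadj X ** cadj A = cadj (A ** X)" by (simp only: cadj_mult)
    then show ?thesis using x3 by simp
  qed
  have ya: "Y ** A = cadj A ** cadj Y"
  proof -
    have "cadj A ** cadj Y = cadj (Y ** A)" by (simp only: cadj_mult)
    then show ?thesis using y4 by simp
  qed
  have "X = X ** (A ** X)" using x2 by (simp add: matrix_mul_assoc)
  also have "\<dots> = X ** (cadj X ** cadj A)" by (simp only: ax)
  also have "\<dots> = X ** (cadj X ** (cadj A ** (A ** Y)))" by (simp only: cA1[symmetric])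
  also have "\<dots> = X ** (cadj X ** cadj A) ** A ** Y" by (simp only: matrix_mul_assoc)
  also have "\<dots> = X ** (A ** X) ** A ** Y" by (simp only: ax)
  also have "\<dots> = (X ** A ** X) ** A ** Y" by (simp only: matrix_mul_assoc)
  also have "\<dots> = X ** A ** Y" using x2 by simp
  finally have ex: "X = X ** A ** Y" .
  have "Y = (Y ** A) ** Y" using y2 by simp
  also have "\<dots> = cadj A ** cadj Y ** Y" by (simp only: ya)
  also have "\<dots> = X ** A ** cadj A ** cadj Y ** Y" by (simp only: cA2[symmetric])
  also have "\<dots> = X ** A ** (cadj A ** cadj Y) ** Y" by (simp only: matrix_mul_assoc)
  also have "\<dots> = X ** A ** (Y ** A) ** Y" by (simp only: ya)
  also have "\<dots> = X ** A ** (Y ** A ** Y)" by (simp only: matrix_mul_assoc)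
  also have "\<dots> = X ** A ** Y" using y2 by simp
  finally show ?thesis using ex by simp
qed

lemma mp_penrose: "penrose A (mp_inverse A)"
proof -
  have "\<exists>!X. penrose A X" using mp_exists mp_unique by blast
  then have "penrose A (THE X. penrose A X)" by (rule theI')
  then show ?thesis unfolding mp_inverse_def penrose_def by simp
qed



lemma pyth2: "inner a b = 0 \<Longrightarrow> (norm (a + b))^2 = (norm a)^2 + (norm (b::'a::real_inner))^2"
  by (simp add: power2_norm_eq_inner inner_add_left inner_add_right inner_commute)

lemma pyth3: "inner a b = 0 \<Longrightarrow> inner a c = 0 \<Longrightarrow> inner b c = 0 \<Longrightarrow>
   (norm (b - c - a))^2 = (norm a)^2 + (norm b)^2 + (norm (c::'a::real_inner))^2"
  by (simp add: power2_norm_eq_inner inner_diff_left inner_diff_right inner_commute)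

lemma div_bound: "c \<le> t * a \<Longrightarrow> 0 \<le> t \<Longrightarrow> 0 \<le> (a::real) \<Longrightarrow> c / a \<le> t"
  by (cases "a = 0") (simp_all add: pos_divide_le_eq)

lemma main1:
  fixes A B :: "complex^'n^'m"
  defines "E \<equiv> B - A" and "X \<equiv> mp_inverse A" and "Y \<equiv> mp_inverse B"
  shows "(norm (Y - X))^2 \<ge>
     ((norm (X ** E))^2 - (spec_norm B)^2 * (norm (X ** E ** Y))^2) / (spec_norm A)^2
   + ((norm (E ** Y))^2 - (spec_norm A)^2 * (norm (X ** E ** Y))^2) / (spec_norm B)^2
   + (norm (Y ** E ** X))^2"
proof -
  have x1: "A ** X ** A = A" and x2: "X ** A ** X = X" and x3: "cadj (A ** X) = A ** X"
    and x4: "cadj (X ** A) = X ** A" using mp_penrose[of A] unfolding penrose_def X_def by auto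
  have y1: "B ** Y ** B = B" and y2: "Y ** B ** Y = Y" and y3: "cadj (B ** Y) = B ** Y"
    and y4: "cadj (Y ** B) = Y ** B" using mp_penrose[of B] unfolding penrose_def Y_def by auto
  define T1 where "T1 = Y ** E ** X"
  define T2 where "T2 = Y ** (mat 1 - A ** X)"
  define T3 where "T3 = (mat 1 - Y ** B) ** X"
  have dec: "Y - X = T2 - T3 - T1"
    by (simp add: T1_def T2_def T3_def E_def mm_diff_l mm_diff_r matrix_mul_assoc)
  have axax: "A ** X ** (A ** X) = A ** X"
  proof -
    have "A ** X ** (A ** X) = (A ** X ** A) ** X" by (simp only: matrix_mul_assoc)
    then show ?thesis using x1 by simp
  qed
  have ybyb: "Y ** B ** (Y ** B) = Y ** B"
  proof -
    have "Y ** B ** (Y ** B) = (Y ** B ** Y) ** B" by (simp only: matrix_mul_assoc)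
    then show ?thesis using y2 by simp
  qed
  have ybT3: "Y ** B ** T3 = 0"
  proof -
    have "Y ** B ** T3 = (Y ** B - Y ** B ** (Y ** B)) ** X"
      by (simp add: T3_def mm_diff_l matrix_mul_assoc)
    then show ?thesis using ybyb by simp
  qed
  have o12: "inner T1 T2 = 0"
  proof -
    have t1: "T1 = T1 ** (A ** X)"
    proof -
      have "T1 ** (A ** X) = Y ** E ** (X ** A ** X)" by (simp add: T1_def matrix_mul_assoc)
      then show ?thesis using x2 by (simp add: T1_def)
    qed
    have t2: "T2 ** (A ** X) = 0"
    proof -
      have "T2 ** (A ** X) = Y ** (A ** X - A ** X ** (A ** X))"
        by (simp add: T2_def mm_diff_r mm_diff_l matrix_mul_assoc)
      then show ?thesis using axax by simp
    qed
    have "inner T1 T2 = inner (T1 ** (A ** X)) T2" using t1 by simp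
    also have "\<dots> = inner T1 (T2 ** cadj (A ** X))" by (rule inner_move_right)
    also have "\<dots> = 0" using t2 x3 by simp
    finally show ?thesis .
  qed
  have o13: "inner T1 T3 = 0"
  proof -
    have t1: "Y ** B ** T1 = T1"
    proof -
      have "Y ** B ** T1 = (Y ** B ** Y) ** E ** X" by (simp add: T1_def matrix_mul_assoc)
      then show ?thesis using y2 by (simp add: T1_def)
    qed
    have "inner T1 T3 = inner (Y ** B ** T1) T3" using t1 by simp
    also have "\<dots> = inner T1 (cadj (Y ** B) ** T3)" by (rule inner_move_left)
    also have "\<dots> = 0" using ybT3 y4 by simp
    finally show ?thesis .
  qed
  have o23: "inner T2 T3 = 0"
  proof -
    have t2: "Y ** B ** T2 = T2"
    proof -
      have "Y ** B ** T2 = (Y ** B ** Y) ** (mat 1 - A ** X)" by (simp add: T2_def matrix_mul_assoc)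
      then show ?thesis using y2 by (simp add: T2_def)
    qed
    have "inner T2 T3 = inner (Y ** B ** T2) T3" using t2 by simp
    also have "\<dots> = inner T2 (cadj (Y ** B) ** T3)" by (rule inner_move_left)
    also have "\<dots> = 0" using ybT3 y4 by simp
    finally show ?thesis .
  qed
  have pyth: "(norm (Y - X))^2 = (norm T1)^2 + (norm T2)^2 + (norm T3)^2"
    unfolding dec by (rule pyth3[OF o12 o13 o23])
  define V where "V = X ** E ** (mat 1 - Y ** B)"
  have b3: "(norm (X ** E))^2 - (spec_norm B)^2 * (norm (X ** E ** Y))^2 \<le> (norm T3)^2 * (spec_norm A)^2"
  proof -
    have xb0: "X ** B ** (mat 1 - Y ** B) = 0"
    proof -
      have "X ** B ** (mat 1 - Y ** B) = X ** B - X ** (B ** Y ** B)"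
        by (simp add: mm_diff_l matrix_mul_assoc)
      then show ?thesis using y1 by simp
    qed
    have vv: "V = - (X ** A ** (mat 1 - Y ** B))"
    proof -
      have "V = X ** B ** (mat 1 - Y ** B) - X ** A ** (mat 1 - Y ** B)"
        by (simp add: V_def E_def mm_diff_l mm_diff_r)
      then show ?thesis using xb0 by simp
    qed
    have "cadj (T3 ** A) = cadj ((mat 1 - Y ** B) ** (X ** A))"
      by (simp add: T3_def matrix_mul_assoc)
    also have "\<dots> = cadj (X ** A) ** (mat 1 - cadj (Y ** B))"
      by (simp only: cadj_mult cadj_diff cadj_mat1)
    also have "\<dots> = X ** A ** (mat 1 - Y ** B)" by (simp only: x4 y4)
    finally have "cadj (T3 ** A) = X ** A ** (mat 1 - Y ** B)" .
    then have nv: "norm V = norm (T3 ** A)" using vv by (metis norm_cadj norm_minus_cancel)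
    have split: "X ** E = X ** E ** (Y ** B) + V"
      by (simp add: V_def mm_diff_l)
    have vyb: "V ** (Y ** B) = 0"
    proof -
      have "V ** (Y ** B) = X ** E ** (Y ** B - Y ** B ** (Y ** B))"
        by (simp add: V_def mm_diff_r mm_diff_l matrix_mul_assoc)
      then show ?thesis using ybyb by simp
    qed
    have orth: "inner (X ** E ** (Y ** B)) V = 0"
    proof -
      have "inner (X ** E ** (Y ** B)) V = inner (X ** E) (V ** cadj (Y ** B))"
        by (rule inner_move_right)
      then show ?thesis using vyb y4 by simp
    qed
    have nx: "(norm (X ** E))^2 = (norm (X ** E ** (Y ** B)))^2 + (norm V)^2"
      using pyth2[OF orth] split by simp
    have "norm (X ** E ** (Y ** B)) \<le> norm (X ** E ** Y) * spec_norm B"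
      using norm_mult_right[of "X ** E ** Y" B] by (simp add: matrix_mul_assoc)
    then have q1: "(norm (X ** E ** (Y ** B)))^2 \<le> (spec_norm B)^2 * (norm (X ** E ** Y))^2"
      by (simp add: power_mono power_mult_distrib mult.commute flip: power_mult_distrib)
    have "norm (T3 ** A) \<le> norm T3 * spec_norm A" by (rule norm_mult_right)
    then have q2: "(norm V)^2 \<le> (norm T3)^2 * (spec_norm A)^2"
      using nv by (simp add: power_mono flip: power_mult_distrib)
    show ?thesis using nx q1 q2 by linarith
  qed
  define W where "W = (mat 1 - A ** X) ** E ** Y"
  have b2: "(norm (E ** Y))^2 - (spec_norm A)^2 * (norm (X ** E ** Y))^2 \<le> (norm T2)^2 * (spec_norm B)^2"
  proof -
    have ax0: "(mat 1 - A ** X) ** A ** Y = 0"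
    proof -
      have "(mat 1 - A ** X) ** A ** Y = (A - A ** X ** A) ** Y"
        by (simp add: mm_diff_r matrix_mul_assoc)
      then show ?thesis using x1 by simp
    qed
    have ww: "W = (mat 1 - A ** X) ** B ** Y"
    proof -
      have "W = (mat 1 - A ** X) ** B ** Y - (mat 1 - A ** X) ** A ** Y"
        by (simp add: W_def E_def mm_diff_l mm_diff_r matrix_mul_assoc)
      then show ?thesis using ax0 by simp
    qed
    have "cadj (B ** T2) = cadj ((B ** Y) ** (mat 1 - A ** X))"
      by (simp add: T2_def matrix_mul_assoc)
    also have "\<dots> = (mat 1 - cadj (A ** X)) ** cadj (B ** Y)"
      by (simp only: cadj_mult cadj_diff cadj_mat1)
    also have "\<dots> = (mat 1 - A ** X) ** (B ** Y)" by (simp only: x3 y3)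
    finally have "cadj (B ** T2) = (mat 1 - A ** X) ** B ** Y" by (simp add: matrix_mul_assoc)
    then have nw: "norm W = norm (B ** T2)" using ww by (metis norm_cadj)
    have split: "E ** Y = A ** X ** (E ** Y) + W"
      by (simp add: W_def mm_diff_r matrix_mul_assoc)
    have axw: "A ** X ** W = 0"
    proof -
      have "A ** X ** W = (A ** X - A ** X ** (A ** X)) ** E ** Y"
        by (simp add: W_def mm_diff_r mm_diff_l matrix_mul_assoc)
      then show ?thesis using axax by simp
    qed
    have orth: "inner (A ** X ** (E ** Y)) W = 0"
    proof -
      have "inner (A ** X ** (E ** Y)) W = inner (E ** Y) (cadj (A ** X) ** W)"
        by (rule inner_move_left)
      then show ?thesis using axw x3 by simp
    qed
    have nx: "(norm (E ** Y))^2 = (norm (A ** X ** (E ** Y)))^2 + (norm W)^2"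
      using pyth2[OF orth] split by simp
    have "norm (A ** X ** (E ** Y)) \<le> spec_norm A * norm (X ** E ** Y)"
      using norm_mult_left[of A "X ** E ** Y"] by (simp add: matrix_mul_assoc)
    then have q1: "(norm (A ** X ** (E ** Y)))^2 \<le> (spec_norm A)^2 * (norm (X ** E ** Y))^2"
      by (simp add: power_mono flip: power_mult_distrib)
    have "norm (B ** T2) \<le> spec_norm B * norm T2" by (rule norm_mult_left)
    then have q2: "(norm W)^2 \<le> (norm T2)^2 * (spec_norm B)^2"
      using nw by (simp add: power_mono mult.commute flip: power_mult_distrib)
    show ?thesis using nx q1 q2 by linarith
  qed
  have d3: "((norm (X ** E))^2 - (spec_norm B)^2 * (norm (X ** E ** Y))^2) / (spec_norm A)^2 \<le> (norm T3)^2"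
    by (rule div_bound[OF b3]) simp_all
  have d2: "((norm (E ** Y))^2 - (spec_norm A)^2 * (norm (X ** E ** Y))^2) / (spec_norm B)^2 \<le> (norm T2)^2"
    by (rule div_bound[OF b2]) simp_all
  have "(norm (Y ** E ** X))^2 = (norm T1)^2" by (simp add: T1_def)
  then show ?thesis using pyth d2 d3 by linarith
qed


lemma frob_norm_eq: "frob_norm A = norm A"
proof -
  have "norm A = sqrt (\<Sum>i\<in>UNIV. (norm (A $ i))\<^sup>2)"
    by (simp add: norm_vec_def L2_set_def)
  also have "\<dots> = frob_norm A"
    unfolding frob_norm_def
    by (simp add: norm_vec_def L2_set_def sum_nonneg)
  finally show ?thesis ..
qed

theorem corollary3p8:
  fixes A B :: "complex ^ 'n ^ 'm"
  defines "E \<equiv> B - A"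
  defines "\<gamma>1 \<equiv> ((frob_norm (mp_inverse A ** E))\<^sup>2
                    - (spec_norm B)\<^sup>2 * (frob_norm (mp_inverse A ** E ** mp_inverse B))\<^sup>2)
                   / (spec_norm A)\<^sup>2
                 + ((frob_norm (E ** mp_inverse B))\<^sup>2
                    - (spec_norm A)\<^sup>2 * (frob_norm (mp_inverse A ** E ** mp_inverse B))\<^sup>2)
                   / (spec_norm B)\<^sup>2"
  defines "\<gamma>2 \<equiv> ((frob_norm (E ** mp_inverse A))\<^sup>2
                    - (spec_norm B)\<^sup>2 * (frob_norm (mp_inverse B ** E ** mp_inverse A))\<^sup>2)
                   / (spec_norm A)\<^sup>2
                 + ((frob_norm (mp_inverse B ** E))\<^sup>2
                    - (spec_norm A)\<^sup>2 * (frob_norm (mp_inverse B ** E ** mp_inverse A))\<^sup>2)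
                   / (spec_norm B)\<^sup>2"
  shows "(frob_norm (mp_inverse B - mp_inverse A))\<^sup>2 \<ge>
           max (\<gamma>1 + (frob_norm (mp_inverse B ** E ** mp_inverse A))\<^sup>2)
               (\<gamma>2 + (frob_norm (mp_inverse A ** E ** mp_inverse B))\<^sup>2)"
proof -
  have L1: "\<gamma>1 + (frob_norm (mp_inverse B ** E ** mp_inverse A))\<^sup>2 \<le> (frob_norm (mp_inverse B - mp_inverse A))\<^sup>2"
    using main1[of A B] unfolding \<gamma>1_def frob_norm_eq E_def by simp
  have ae: "A - B = - E" by (simp add: E_def)
  have L2: "\<gamma>2 + (frob_norm (mp_inverse A ** E ** mp_inverse B))\<^sup>2 \<le> (frob_norm (mp_inverse B - mp_inverse A))\<^sup>2"
  proof -
    have "(frob_norm (mp_inverse B - mp_inverse A))\<^sup>2 = (norm (mp_inverse A - mp_inverse B))\<^sup>2"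
      by (simp add: frob_norm_eq norm_minus_commute)
    moreover have "norm (mp_inverse B ** (A - B)) = norm (mp_inverse B ** E)"
      by (simp add: ae mm_neg_l)
    moreover have "norm ((A - B) ** mp_inverse A) = norm (E ** mp_inverse A)"
      by (simp add: ae mm_neg_r)
    moreover have "norm (mp_inverse B ** (A - B) ** mp_inverse A) = norm (mp_inverse B ** E ** mp_inverse A)"
      by (simp add: ae mm_neg_l mm_neg_r)
    moreover have "norm (mp_inverse A ** (A - B) ** mp_inverse B) = norm (mp_inverse A ** E ** mp_inverse B)"
      by (simp add: ae mm_neg_l mm_neg_r)
    ultimately show ?thesis
      using main1[of B A] unfolding \<gamma>2_def frob_norm_eq by (simp add: algebra_simps)
  qed
  show ?thesis using L1 L2 by simp
qed
end
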